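(* As formal power series in $z$ with coefficients polynomials in $t$, \[ F(t,z)=\sum_{n\ge 0}\sum_{w\in S_n} t^{\operatorname{dep}(w)} z^n = \cfrac{1}{1 - z - \cfrac{tz^2}{1 - 3tz - \cfrac{4t^3 z^2}{1 - 5t^2 z - \cfrac{9t^5 z^2}{1 - 7t^3 z - \cdots}}}}, \] i.e. the $J$-fraction whose $i$-th level ($i\ge 0$) has denominator term $1-(2i+1)t^i z$ and whose numerator linking level $i-1$ to level $i$ ($i\ge1$) is $i^2 t^{2i-1} z^2$.
   Context: $S_0$ consists of the single empty permutation, of depth $0$. For $w\in S_n$, the depth is $\operatorname{dep}(w)=\sum_{i:\,w(i)>i}(w(i)-i)$, i.e. half the total displacement $\sum_{i=1}^n |w(i)-i|$. *)

theory Defs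
  imports "HOL-Combinatorics.Permutations" "HOL-Computational_Algebra.Formal_Power_Series"
          "HOL-Computational_Algebra.Polynomial"
begin

definition dep :: "nat \<Rightarrow> (nat \<Rightarrow> nat) \<Rightarrow> nat" where
  "dep n w = (\<Sum>i\<in>{1..n}. if i < w i then w i - i else 0)"

definition depthGF :: "int poly fps" where
  "depthGF = Abs_fps (\<lambda>n. \<Sum>w\<in>{w. w permutes {1..n}}. monom 1 (dep n w))"

definition jb :: "nat \<Rightarrow> int poly" where
  "jb i = monom (int (2*i+1)) i"

definition jlam :: "nat \<Rightarrow> int poly" where
  "jlam i = monom (int (i^2)) (2*i-1)"

text \<open>Truncated tail of the J-fraction starting at level i with m further levels;
  1/(...) is the formal inverse of a series with constant term 1.\<close>
fun jtail :: "nat \<Rightarrow> nat \<Rightarrow> int poly fps" where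
  "jtail 0 i = fps_right_inverse (1 - fps_const (jb i) * fps_X) 1"
| "jtail (Suc m) i = fps_right_inverse
      (1 - fps_const (jb i) * fps_X - fps_const (jlam (Suc i)) * fps_X^2 * jtail m (Suc i)) 1"

definition jconv :: "nat \<Rightarrow> int poly fps" where
  "jconv k = jtail k 0"

end

theory Submission
  imports Defs
begin


fun Wb :: "nat \<Rightarrow> nat \<Rightarrow> nat \<Rightarrow> int poly" where
  "Wb H 0 h = (if h = 0 then 1 else 0)"
| "Wb H (Suc n) h = (if H < h then 0 else
     (if h = 0 then 0 else Wb H n (h - 1)) + jb h * Wb H n h + jlam (Suc h) * Wb H n (Suc h))"

definition G :: "nat \<Rightarrow> nat \<Rightarrow> int poly fps" where
  "G H h = Abs_fps (\<lambda>n. Wb H n h)"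

lemma Wb_big: "H < h \<Longrightarrow> Wb H n h = 0"
  by (cases n) auto

lemma G_big: "H < h \<Longrightarrow> G H h = 0"
  by (auto simp: G_def Wb_big fps_eq_iff)

lemma G_eq: "h \<le> H \<Longrightarrow> G H h = (if h = 0 then 1 else 0) + fps_X * ((if h = 0 then 0 else G H (h-1))
   + fps_const (jb h) * G H h + fps_const (jlam (Suc h)) * G H (Suc h))"
  by (auto simp: fps_eq_iff G_def) (case_tac n; auto)+


lemma inv1: "fps_nth f 0 = (1::int poly) \<Longrightarrow> f * fps_right_inverse f 1 = 1"
  using fps_right_inverse[of f 1] by simp

lemma solve: assumes "G' * D = Y" "D * T = (1::int poly fps)" shows "G' = Y * T"
proof -
  have "G' = G' * (D * T)" using assms by simp
  also have "\<dots> = Y * T" using assms(1) by (simp add: mult.assoc[symmetric])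
  finally show ?thesis .
qed

lemma "(1 - fps_const (jb H) * fps_X) * jtail 0 H = 1" by (simp add: inv1)

lemma down: "d < H \<Longrightarrow> G H (H - d) = fps_X * G H (H - d - 1) * jtail d (H - d)"
proof (induction d)
  case 0
  have e: "G H H = fps_X * G H (H - 1) + fps_X * fps_const (jb H) * G H H"
    using G_eq[of H H] 0 G_big[of H "Suc H"] by (simp add: distrib_left mult.assoc)
  have "G H H * (1 - fps_const (jb H) * fps_X) = G H H - fps_X * fps_const (jb H) * G H H"
    by (simp add: right_diff_distrib mult.commute mult.left_commute)
  also have "\<dots> = fps_X * G H (H - 1)" using e by (metis add_diff_cancel_right')
  finally have a: "G H H * (1 - fps_const (jb H) * fps_X) = fps_X * G H (H - 1)" .
  have "(1 - fps_const (jb H) * fps_X) * jtail 0 H = 1" by (simp add: inv1)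
  from solve[OF a this] show ?case by simp
next
  case (Suc d)
  let ?h = "H - Suc d"
  let ?T = "jtail d (Suc ?h)"
  have hs: "Suc ?h = H - d" using Suc by auto
  have IH: "G H (Suc ?h) = fps_X * G H ?h * ?T" using Suc hs by simp
  have e: "G H ?h = fps_X * G H (?h - 1) + fps_X * fps_const (jb ?h) * G H ?h
      + fps_X * fps_const (jlam (Suc ?h)) * G H (Suc ?h)"
    using G_eq[of ?h H] Suc by (simp add: distrib_left mult.assoc)
  have "G H ?h * (1 - fps_const (jb ?h) * fps_X - fps_const (jlam (Suc ?h)) * fps_X^2 * ?T)
     = G H ?h - fps_X * fps_const (jb ?h) * G H ?h - fps_X * fps_const (jlam (Suc ?h)) * (fps_X * G H ?h * ?T)"
    by (simp add: right_diff_distrib mult.commute mult.left_commute power2_eq_square)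
  also have "\<dots> = fps_X * G H (?h - 1)" using e unfolding IH by (simp add: algebra_simps)
  finally have a: "G H ?h * (1 - fps_const (jb ?h) * fps_X - fps_const (jlam (Suc ?h)) * fps_X^2 * ?T)
     = fps_X * G H (?h - 1)" .
  have "(1 - fps_const (jb ?h) * fps_X - fps_const (jlam (Suc ?h)) * fps_X^2 * ?T)
     * jtail (Suc d) ?h = 1" by (simp add: inv1)
  from solve[OF a this] show ?case using hs by simp
qed
lemma G0: "G H 0 = jtail H 0"
proof (cases H)
  case 0
  have e: "G H 0 = 1 + fps_X * fps_const (jb 0) * G H 0"
    using G_eq[of 0 H] 0 G_big[of H 1] by (simp add: distrib_left mult.assoc)
  have "G H 0 * (1 - fps_const (jb 0) * fps_X) = G H 0 - fps_X * fps_const (jb 0) * G H 0"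
    by (simp add: right_diff_distrib mult.commute mult.left_commute)
  also have "\<dots> = 1" using e by (metis add_diff_cancel_right')
  finally have a: "G H 0 * (1 - fps_const (jb 0) * fps_X) = 1" .
  have "(1 - fps_const (jb 0) * fps_X) * jtail 0 0 = 1" by (simp add: inv1)
  from solve[OF a this] show ?thesis using 0 by simp
next
  case (Suc m)
  let ?T = "jtail m 1"
  have IH: "G H 1 = fps_X * G H 0 * ?T" using down[of m H] Suc by simp
  have e: "G H 0 = 1 + fps_X * fps_const (jb 0) * G H 0
      + fps_X * fps_const (jlam 1) * G H 1"
    using G_eq[of 0 H] by (simp add: distrib_left mult.assoc add.assoc)
  have "G H 0 * (1 - fps_const (jb 0) * fps_X - fps_const (jlam 1) * fps_X^2 * ?T)
     = G H 0 - fps_X * fps_const (jb 0) * G H 0 - fps_X * fps_const (jlam 1) * (fps_X * G H 0 * ?T)"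
    by (simp add: right_diff_distrib mult.commute mult.left_commute power2_eq_square)
  also have "\<dots> = 1" using e unfolding IH by (simp add: algebra_simps)
  finally have a: "G H 0 * (1 - fps_const (jb 0) * fps_X - fps_const (jlam 1) * fps_X^2 * ?T) = 1" .
  have "(1 - fps_const (jb 0) * fps_X - fps_const (jlam (Suc 0)) * fps_X^2 * jtail m (Suc 0))
     * jtail (Suc m) 0 = 1" by (simp add: inv1)
  from solve[OF a[simplified] this[simplified]] show ?thesis using Suc by simp
qed

lemma jconv_nth: "fps_nth (jconv H) n = Wb H n 0"
  using G0[of H] unfolding jconv_def G_def by (metis fps_nth_Abs_fps)



definition PI :: "nat \<Rightarrow> (nat \<times> nat) set set" where
  "PI j = {R. R \<subseteq> {1..j} \<times> {1..j} \<and> (\<forall>i v v'. (i,v)\<in>R \<longrightarrow> (i,v')\<in>R \<longrightarrow> v = v')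
              \<and> (\<forall>i i' v. (i,v)\<in>R \<longrightarrow> (i',v)\<in>R \<longrightarrow> i = i')}"

definition rho :: "nat \<Rightarrow> (nat \<times> nat) set \<Rightarrow> (nat \<times> nat) set" where
  "rho j R = R \<inter> ({1..j} \<times> {1..j})"

lemma finite_PI: "finite (PI j)"
proof -
  have "PI j \<subseteq> Pow ({1..j} \<times> {1..j})" by (auto simp: PI_def)
  then show ?thesis by (rule finite_subset) auto
qed

lemma PI_finite: "R \<in> PI j \<Longrightarrow> finite R"
  unfolding PI_def by (auto intro: finite_subset)

lemma rho_PI: "R \<in> PI (Suc j) \<Longrightarrow> rho j R \<in> PI j"
  unfolding PI_def rho_def by auto

lemma card_Domain: assumes "R \<in> PI j" shows "card (Domain R) = card R"
proof -
  have "inj_on fst R" using assms unfolding PI_def inj_on_def by force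
  moreover have "Domain R = fst ` R" by force
  ultimately show ?thesis by (simp add: card_image)
qed

lemma card_Range: assumes "R \<in> PI j" shows "card (Range R) = card R"
proof -
  have "inj_on snd R" using assms unfolding PI_def inj_on_def by force
  moreover have "Range R = snd ` R" by force
  ultimately show ?thesis by (simp add: card_image)
qed

lemma card_PI_le: assumes "R \<in> PI j" shows "card R \<le> j"
proof -
  have "Domain R \<subseteq> {1..j}" using assms unfolding PI_def by auto
  then have "card (Domain R) \<le> j" using card_mono[of "{1..j}" "Domain R"] by simp
  then show ?thesis using card_Domain[OF assms] by simp
qed

lemma card_comp_Domain: assumes "R \<in> PI j" shows "card ({1..j} - Domain R) = j - card R"
proof -
  have "Domain R \<subseteq> {1..j}" using assms unfolding PI_def by auto
  then show ?thesis using card_Domain[OF assms] by (simp add: card_Diff_subset finite_subset)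
qed

lemma card_comp_Range: assumes "R \<in> PI j" shows "card ({1..j} - Range R) = j - card R"
proof -
  have "Range R \<subseteq> {1..j}" using assms unfolding PI_def by auto
  then show ?thesis using card_Range[OF assms] by (simp add: card_Diff_subset finite_subset)
qed



context
  fixes j :: nat and g :: "(nat \<times> nat) set"
  assumes g: "g \<in> PI j"
begin

definition "AA = {1..j} - Range g"
definition "BB = {1..j} - Domain g"
definition "U2 = insert (insert (Suc j, Suc j) g) ((\<lambda>v. insert (Suc j, v) g) ` AA \<union> (\<lambda>i. insert (i, Suc j) g) ` BB)"
definition "U3 = (\<lambda>(i,v). insert (i, Suc j) (insert (Suc j, v) g)) ` (BB \<times> AA)"

lemma gs: "g \<subseteq> {1..j} \<times> {1..j}" using g unfolding PI_def by auto
lemma gf: "(i,v)\<in>g \<Longrightarrow> (i,v')\<in>g \<Longrightarrow> v = v'" using g unfolding PI_def by auto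
lemma gi: "(i,v)\<in>g \<Longrightarrow> (i',v)\<in>g \<Longrightarrow> i = i'" using g unfolding PI_def by auto
lemma gfin: "finite g" using PI_finite[OF g] .

lemma nm1: "(Suc j, v) \<notin> g" using gs by auto
lemma nm2: "(i, Suc j) \<notin> g" using gs by auto

lemma fib_sub: assumes R: "R \<in> PI (Suc j)" and rg: "rho j R = g"
  shows "R \<in> {g} \<union> U2 \<union> U3"
proof -
  have Rs: "R \<subseteq> {1..Suc j} \<times> {1..Suc j}" and Rf: "\<And>i v v'. (i,v)\<in>R \<Longrightarrow> (i,v')\<in>R \<Longrightarrow> v = v'"
    and Ri: "\<And>i i' v. (i,v)\<in>R \<Longrightarrow> (i',v)\<in>R \<Longrightarrow> i = i'" using R unfolding PI_def by auto
  have spl: "R = g \<union> {p\<in>R. fst p = Suc j \<or> snd p = Suc j}"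
    using Rs rg unfolding rho_def by force
  have gR: "g \<subseteq> R" using rg unfolding rho_def by auto
  consider (mm) "(Suc j, Suc j) \<in> R"
    | (none) "\<forall>v. (Suc j,v)\<notin>R" "\<forall>i. (i,Suc j)\<notin>R"
    | (a) v where "(Suc j,v)\<in>R" "v \<noteq> Suc j" "\<forall>i. (i,Suc j)\<notin>R"
    | (b) i where "(i,Suc j)\<in>R" "i \<noteq> Suc j" "\<forall>v. (Suc j,v) \<notin> R"
    | (ab) i v where "(Suc j,v)\<in>R" "(i,Suc j) \<in> R" "v \<noteq> Suc j" "i \<noteq> Suc j"
    by metis
  note key = this
  have key2: "i = Suc j \<or> v = Suc j" if "(i,v) \<in> R" "(i,v) \<notin> g" for i v
  proof -
    have "(i,v) \<in> {1..Suc j} \<times> {1..Suc j}" using Rs that(1) by blast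
    moreover have "(i,v) \<notin> {1..j} \<times> {1..j}" using that rg unfolding rho_def by blast
    ultimately show ?thesis by auto
  qed
  from key show ?thesis
  proof cases
    case mm
    have "R = insert (Suc j, Suc j) g"
    proof (rule set_eqI, clarify)
      fix i v show "(i,v) \<in> R \<longleftrightarrow> (i,v) \<in> insert (Suc j, Suc j) g"
        using key2[of i v] Rf[of "Suc j" v "Suc j"] Ri[of i "Suc j" "Suc j"] mm gR by auto
    qed
    then show ?thesis unfolding U2_def by auto
  next
    case none
    have "R = g"
    proof (rule set_eqI, clarify)
      fix i v show "(i,v) \<in> R \<longleftrightarrow> (i,v) \<in> g"
        using key2[of i v] none gR by auto
    qed
    then show ?thesis by auto
  next
    case (a w)
    have "R = insert (Suc j, w) g"
    proof (rule set_eqI, clarify)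
      fix i v show "(i,v) \<in> R \<longleftrightarrow> (i,v) \<in> insert (Suc j, w) g"
        using key2[of i v] Rf[of "Suc j" v w] a gR by auto
    qed
    moreover have "w \<in> AA" unfolding AA_def
    proof -
      have "w \<in> {1..Suc j}" using a Rs by auto
      moreover have "w \<notin> Range g"
      proof
        assume "w \<in> Range g" then obtain i' where "(i',w) \<in> g" by auto
        then have "(i', w) \<in> R" "i' \<le> j" using gR gs by auto
        then show False using Ri[of i' w "Suc j"] a by auto
      qed
      ultimately show "w \<in> {1..j} - Range g" using a by auto
    qed
    ultimately show ?thesis unfolding U2_def by auto
  next
    case (b w)
    have "R = insert (w, Suc j) g"
    proof (rule set_eqI, clarify)
      fix i v show "(i,v) \<in> R \<longleftrightarrow> (i,v) \<in> insert (w, Suc j) g"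
        using key2[of i v] Ri[of i v w] b gR by auto
    qed
    moreover have "w \<in> BB" unfolding BB_def
    proof -
      have "w \<in> {1..Suc j}" using b Rs by auto
      moreover have "w \<notin> Domain g"
      proof
        assume "w \<in> Domain g" then obtain v' where "(w,v') \<in> g" by auto
        then have "(w, v') \<in> R" "v' \<le> j" using gR gs by auto
        then show False using Rf[of w v' "Suc j"] b by auto
      qed
      ultimately show "w \<in> {1..j} - Domain g" using b by auto
    qed
    ultimately show ?thesis unfolding U2_def by auto
  next
    case (ab w1 w2)
    have "R = insert (w1, Suc j) (insert (Suc j, w2) g)"
    proof (rule set_eqI, clarify)
      fix i v show "(i,v) \<in> R \<longleftrightarrow> (i,v) \<in> insert (w1, Suc j) (insert (Suc j, w2) g)"
        using key2[of i v] Ri[of i v w1] Rf[of "Suc j" v w2] ab gR by auto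
    qed
    moreover have "w2 \<in> AA" unfolding AA_def
    proof -
      have "w2 \<in> {1..Suc j}" using ab Rs by auto
      moreover have "w2 \<notin> Range g"
      proof
        assume "w2 \<in> Range g" then obtain i' where "(i',w2) \<in> g" by auto
        then have "(i', w2) \<in> R" "i' \<le> j" using gR gs by auto
        then show False using Ri[of i' w2 "Suc j"] ab by auto
      qed
      ultimately show "w2 \<in> {1..j} - Range g" using ab by auto
    qed
    moreover have "w1 \<in> BB" unfolding BB_def
    proof -
      have "w1 \<in> {1..Suc j}" using ab Rs by auto
      moreover have "w1 \<notin> Domain g"
      proof
        assume "w1 \<in> Domain g" then obtain v' where "(w1,v') \<in> g" by auto
        then have "(w1, v') \<in> R" "v' \<le> j" using gR gs by auto
        then show False using Rf[of w1 v' "Suc j"] ab by auto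
      qed
      ultimately show "w1 \<in> {1..j} - Domain g" using ab by auto
    qed
    ultimately show ?thesis unfolding U3_def by auto
  qed
qed

lemma rho_ins1: "rho j (insert (Suc j, v) X) = rho j X" by (auto simp: rho_def)
lemma rho_ins2: "rho j (insert (i, Suc j) X) = rho j X" by (auto simp: rho_def)
lemma rho_g: "rho j g = g" using gs by (auto simp: rho_def)

lemma PI_mono: "g \<in> PI (Suc j)" using g unfolding PI_def by auto

lemma fib_sup: "{g} \<union> U2 \<union> U3 \<subseteq> {R\<in>PI (Suc j). rho j R = g}"
proof -
  have A: "v \<in> AA \<Longrightarrow> (i,v) \<notin> g" for i v unfolding AA_def by auto
  have B: "i \<in> BB \<Longrightarrow> (i,v) \<notin> g" for i v unfolding BB_def by auto
  have AAs: "AA \<subseteq> {1..j}" and BBs: "BB \<subseteq> {1..j}" unfolding AA_def BB_def by auto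
  have "insert (Suc j, Suc j) g \<in> PI (Suc j)" using g nm1 nm2 unfolding PI_def by auto
  moreover have "v \<in> AA \<Longrightarrow> insert (Suc j, v) g \<in> PI (Suc j)" for v
    using g nm1 A[of v] AAs unfolding PI_def by auto
  moreover have "i \<in> BB \<Longrightarrow> insert (i, Suc j) g \<in> PI (Suc j)" for i
    using g nm2 B[of i] BBs unfolding PI_def by auto
  moreover have "i \<in> BB \<Longrightarrow> v \<in> AA \<Longrightarrow> insert (i, Suc j) (insert (Suc j, v) g) \<in> PI (Suc j)" for i v
    using g nm1 nm2 A[of v] B[of i] AAs BBs unfolding PI_def by auto
  ultimately show ?thesis using PI_mono unfolding U2_def U3_def
    by (auto simp: rho_ins1 rho_ins2 rho_g)
qed

lemma fib_eq: "{R\<in>PI (Suc j). rho j R = g} = {g} \<union> U2 \<union> U3"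
  using fib_sub fib_sup by blast

lemma AAs: "AA \<subseteq> {1..j}" and BBs: "BB \<subseteq> {1..j}" unfolding AA_def BB_def by auto
lemma finAA: "finite AA" and finBB: "finite BB" using AAs BBs finite_subset by auto
lemma cardAA: "card AA = j - card g" unfolding AA_def using card_comp_Range[OF g] .
lemma cardBB: "card BB = j - card g" unfolding BB_def using card_comp_Domain[OF g] .

lemma card_U2_el: "R \<in> U2 \<Longrightarrow> card R = Suc (card g)"
  unfolding U2_def using gfin nm1 nm2 by auto

lemma card_U3_el: "R \<in> U3 \<Longrightarrow> card R = Suc (Suc (card g))"
proof -
  assume "R \<in> U3"
  then obtain i v where iv: "i \<in> BB" "v \<in> AA" "R = insert (i, Suc j) (insert (Suc j, v) g)"
    unfolding U3_def by auto
  have "(i, Suc j) \<noteq> (Suc j, v)" using iv BBs by auto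
  then show ?thesis using iv gfin nm1 nm2 by auto
qed

lemma card_U2: "card U2 = 2 * (j - card g) + 1"
proof -
  let ?I1 = "(\<lambda>v. insert (Suc j, v) g) ` AA" and ?I2 = "(\<lambda>i. insert (i, Suc j) g) ` BB"
  have i1: "inj_on (\<lambda>v. insert (Suc j, v) g) AA"
  proof (rule inj_onI)
    fix v v' assume "insert (Suc j, v) g = insert (Suc j, v') g"
    then have "(Suc j, v) \<in> insert (Suc j, v') g" by auto
    then show "v = v'" using nm1 by auto
  qed
  have i2: "inj_on (\<lambda>i. insert (i, Suc j) g) BB"
  proof (rule inj_onI)
    fix v v' assume "insert (v, Suc j) g = insert (v', Suc j) g"
    then have "(v, Suc j) \<in> insert (v', Suc j) g" by auto
    then show "v = v'" using nm2 by auto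
  qed
  have d: "?I1 \<inter> ?I2 = {}"
  proof (rule ccontr)
    assume "?I1 \<inter> ?I2 \<noteq> {}"
    then obtain v i where "v \<in> AA" "i \<in> BB" "insert (Suc j, v) g = insert (i, Suc j) g" by auto
    moreover then have "(Suc j, v) \<in> insert (i, Suc j) g" by auto
    ultimately show False using nm1 BBs by auto
  qed
  have n: "insert (Suc j, Suc j) g \<notin> ?I1 \<union> ?I2"
  proof
    assume "insert (Suc j, Suc j) g \<in> ?I1 \<union> ?I2"
    then consider v where "v \<in> AA" "insert (Suc j, Suc j) g = insert (Suc j, v) g"
      | i where "i \<in> BB" "insert (Suc j, Suc j) g = insert (i, Suc j) g" by auto
    then show False
    proof cases
      case 1 then have "(Suc j, Suc j) \<in> insert (Suc j, v) g" by auto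
      then show False using 1 AAs nm1 by auto
    next
      case 2 then have "(Suc j, Suc j) \<in> insert (i, Suc j) g" by auto
      then show False using 2 BBs nm1 by auto
    qed
  qed
  have "card U2 = Suc (card (?I1 \<union> ?I2))" unfolding U2_def using n finAA finBB by simp
  also have "card (?I1 \<union> ?I2) = card ?I1 + card ?I2" using d finAA finBB by (simp add: card_Un_disjoint)
  also have "\<dots> = card AA + card BB" using i1 i2 by (simp add: card_image)
  finally show ?thesis using cardAA cardBB by simp
qed

lemma card_U3: "card U3 = (j - card g)^2"
proof -
  have "inj_on (\<lambda>(i,v). insert (i, Suc j) (insert (Suc j, v) g)) (BB \<times> AA)"
  proof (rule inj_onI, clarify)
    fix i v i' v' assume a: "i \<in> BB" "v \<in> AA" "i' \<in> BB" "v' \<in> AA"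
      and e: "insert (i, Suc j) (insert (Suc j, v) g) = insert (i', Suc j) (insert (Suc j, v') g)"
    have "(i, Suc j) \<in> insert (i', Suc j) (insert (Suc j, v') g)" using e by blast
    then have "i = i'" using a BBs nm2 by auto
    moreover have "(Suc j, v) \<in> insert (i', Suc j) (insert (Suc j, v') g)" using e by blast
    then have "v = v'" using a AAs nm1 by auto
    ultimately show "i = i' \<and> v = v'" by simp
  qed
  then have "card U3 = card (BB \<times> AA)" unfolding U3_def by (rule card_image)
  then show ?thesis using cardAA cardBB by (simp add: power2_eq_square card_cartesian_product)
qed

lemma finU2: "finite U2" unfolding U2_def using finAA finBB by simp
lemma finU3: "finite U3" unfolding U3_def using finAA finBB by simp

lemma fib_sum:
  fixes f :: "nat \<Rightarrow> 'a::comm_semiring_1"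
  shows "(\<Sum>R\<in>{R\<in>PI (Suc j). rho j R = g}. f (card R)) =
     f (card g) + of_nat (2 * (j - card g) + 1) * f (Suc (card g)) + of_nat ((j - card g)^2) * f (Suc (Suc (card g)))"
proof -
  have "g \<notin> U2" using card_U2_el by fastforce
  then have d1: "{g} \<inter> U2 = {}" by simp
  have "g \<notin> U3" using card_U3_el by fastforce
  moreover have "U2 \<inter> U3 = {}"
  proof (rule ccontr)
    assume "U2 \<inter> U3 \<noteq> {}" then obtain R where "R \<in> U2" "R \<in> U3" by blast
    then show False using card_U2_el card_U3_el by fastforce
  qed
  ultimately have d2: "({g} \<union> U2) \<inter> U3 = {}" by blast
  have "(\<Sum>R\<in>{R\<in>PI (Suc j). rho j R = g}. f (card R)) = (\<Sum>R\<in>{g} \<union> U2 \<union> U3. f (card R))"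
    by (simp add: fib_eq)
  also have "\<dots> = (\<Sum>R\<in>{g}. f (card R)) + (\<Sum>R\<in>U2. f (card R)) + (\<Sum>R\<in>U3. f (card R))"
    using d1 d2 finU2 finU3 by (simp add: sum.union_disjoint add.assoc)
  also have "(\<Sum>R\<in>U2. f (card R)) = (\<Sum>R\<in>U2. f (Suc (card g)))"
    using card_U2_el by (intro sum.cong) auto
  also have "(\<Sum>R\<in>U3. f (card R)) = (\<Sum>R\<in>U3. f (Suc (Suc (card g))))"
    using card_U3_el by (intro sum.cong) auto
  finally show ?thesis using card_U2 card_U3 by simp
qed

end


definition hk :: "(nat \<times> nat) set \<Rightarrow> nat \<Rightarrow> nat" where
  "hk R k = card {i\<in>{1..k}. \<forall>v. (i,v)\<in>R \<longrightarrow> k < v}"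

definition cost :: "(nat \<times> nat) set \<Rightarrow> nat \<Rightarrow> nat" where
  "cost R j = (\<Sum>k=1..j. hk R k)"

definition Q :: "nat \<Rightarrow> nat \<Rightarrow> int poly" where
  "Q j h = (\<Sum>R\<in>{R\<in>PI j. card R + h = j}. monom 1 (cost R j))"

lemma hk_rho: assumes "R \<in> PI (Suc j)" "k \<le> j" shows "hk (rho j R) k = hk R k"
proof -
  have Rs: "R \<subseteq> {1..Suc j} \<times> {1..Suc j}" using assms unfolding PI_def by auto
  have "{i\<in>{1..k}. \<forall>v. (i,v)\<in>rho j R \<longrightarrow> k < v} = {i\<in>{1..k}. \<forall>v. (i,v)\<in>R \<longrightarrow> k < v}"
  proof (rule Collect_cong, rule conj_cong[OF refl], rule iffI)
    fix i assume i: "i \<in> {1..k}" and a: "\<forall>v. (i, v) \<in> rho j R \<longrightarrow> k < v"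
    show "\<forall>v. (i, v) \<in> R \<longrightarrow> k < v"
    proof (intro allI impI)
      fix v assume v: "(i,v) \<in> R"
      show "k < v"
      proof (cases "v \<le> j")
        case True
        then have "(i,v) \<in> rho j R" using v Rs i assms(2) unfolding rho_def by auto
        then show ?thesis using a by auto
      qed (use assms(2) in auto)
    qed
  qed (auto simp: rho_def)
  then show ?thesis unfolding hk_def by simp
qed

lemma hk_last: assumes "R \<in> PI (Suc j)" shows "hk R (Suc j) = Suc j - card R"
proof -
  have Rs: "R \<subseteq> {1..Suc j} \<times> {1..Suc j}" using assms unfolding PI_def by auto
  have "{i\<in>{1..Suc j}. \<forall>v. (i,v)\<in>R \<longrightarrow> Suc j < v} = {1..Suc j} - Domain R"
    using Rs by force
  then show ?thesis unfolding hk_def using card_comp_Domain[OF assms] by simp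
qed

lemma cost_Suc: assumes "R \<in> PI (Suc j)" shows "cost R (Suc j) = cost (rho j R) j + (Suc j - card R)"
proof -
  have "cost R (Suc j) = (\<Sum>k=1..j. hk R k) + hk R (Suc j)" unfolding cost_def by simp
  also have "(\<Sum>k=1..j. hk R k) = cost (rho j R) j" unfolding cost_def
    using hk_rho[OF assms] by (intro sum.cong) auto
  finally show ?thesis using hk_last[OF assms] by simp
qed

lemma ofnat_monom: "(of_nat k :: int poly) * monom a n = monom (of_nat k * a) n"
  by (simp add: of_nat_monom mult_monom)

lemma Q_alt: "Q j x = (\<Sum>g\<in>PI j. if card g + x = j then monom 1 (cost g j) else 0)"
  unfolding Q_def by (simp add: sum.inter_filter finite_PI)

lemma pointwise:
  assumes c: "c \<le> j" and a: "a = 2 * (j - c) + 1" and b: "b = (j - c)^2"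
  shows "monom 1 M * ((if c + h = Suc j then monom 1 h else 0) + of_nat a * (if Suc c + h = Suc j then monom 1 h else 0)
      + of_nat b * (if Suc (Suc c) + h = Suc j then monom 1 h else 0))
   = (if h = 0 then 0 else monom 1 h * (if c + (h - 1) = j then monom 1 M else 0))
     + monom (of_nat (2*h+1)) h * (if c + h = j then monom 1 M else 0)
     + monom (of_nat ((h+1)^2)) h * (if c + Suc h = j then monom 1 M else (0::int poly))"
  (is "?L = ?R")
proof -
  consider "c + h = Suc j" | "c + h = j" | "c + Suc h = j" | "c + h \<noteq> Suc j" "c + h \<noteq> j" "c + Suc h \<noteq> j" by blast
  then show ?thesis
  proof cases
    case 1
    then have h: "h \<noteq> 0" "c + (h - 1) = j" using c by auto
    have "?L = monom 1 M * monom 1 h" using 1 by simp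
    moreover have "?R = monom 1 h * monom 1 M" using 1 h by simp
    ultimately show ?thesis by (simp add: mult.commute)
  next
    case 2
    have "?L = monom 1 M * (of_nat a * monom 1 h)" using 2 by simp
    also have "(of_nat a :: int poly) * monom 1 h = monom (of_nat a) h" using ofnat_monom[of a 1 h] by simp
    finally have L: "?L = monom (of_nat a) (M + h)" by (simp add: mult_monom)
    have "?R = monom (of_nat (2*h+1)) h * monom 1 M" using 2 by (cases h) auto
    then have R: "?R = monom (of_nat (2*h+1)) (M + h)" by (simp add: mult_monom add.commute)
    have "a = 2*h+1" using a 2 by auto
    then show ?thesis using L R by simp
  next
    case 3
    have "?L = monom 1 M * (of_nat b * monom 1 h)" using 3 by simp
    also have "(of_nat b :: int poly) * monom 1 h = monom (of_nat b) h" using ofnat_monom[of b 1 h] by simp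
    finally have L: "?L = monom (of_nat b) (M + h)" by (simp add: mult_monom)
    have "?R = monom (of_nat ((h+1)^2)) h * monom 1 M" using 3 by (cases h) auto
    then have R: "?R = monom (of_nat ((h+1)^2)) (M + h)" by (simp add: mult_monom add.commute)
    have "b = (h+1)^2" using b 3 by auto
    then show ?thesis using L R by simp
  next
    case 4
    then show ?thesis by auto
  qed
qed

lemma Q_rec: "Q (Suc j) h = (if h = 0 then 0 else monom 1 h * Q j (h - 1))
   + monom (of_nat (2*h+1)) h * Q j h + monom (of_nat ((h+1)^2)) h * Q j (Suc h)" (is "_ = ?rhs")
proof -
  define \<phi> where "\<phi> c = (if c + h = Suc j then monom 1 h else (0::int poly))" for c
  have "Q (Suc j) h = (\<Sum>R\<in>PI (Suc j). if card R + h = Suc j then monom 1 (cost R (Suc j)) else 0)"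
    by (rule Q_alt)
  also have "\<dots> = (\<Sum>R\<in>PI (Suc j). monom 1 (cost (rho j R) j) * \<phi> (card R))"
  proof (rule sum.cong[OF refl])
    fix R assume R: "R \<in> PI (Suc j)"
    show "(if card R + h = Suc j then monom 1 (cost R (Suc j)) else 0) = monom 1 (cost (rho j R) j) * \<phi> (card R)"
    proof (cases "card R + h = Suc j")
      case True
      then have "cost R (Suc j) = cost (rho j R) j + h" using cost_Suc[OF R] by simp
      then show ?thesis using True unfolding \<phi>_def by (simp add: mult_monom)
    qed (simp add: \<phi>_def)
  qed
  also have "\<dots> = (\<Sum>g\<in>PI j. \<Sum>R\<in>{R. R \<in> PI (Suc j) \<and> rho j R = g}. monom 1 (cost (rho j R) j) * \<phi> (card R))"
    by (rule sum.group[symmetric]) (auto simp: finite_PI rho_PI)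
  also have "\<dots> = (\<Sum>g\<in>PI j. monom 1 (cost g j) * (\<Sum>R\<in>{R \<in> PI (Suc j). rho j R = g}. \<phi> (card R)))"
    by (intro sum.cong refl) (auto simp: sum_distrib_left)
  also have "\<dots> = (\<Sum>g\<in>PI j. monom 1 (cost g j) * (\<phi> (card g) + of_nat (2 * (j - card g) + 1) * \<phi> (Suc (card g))
       + of_nat ((j - card g)^2) * \<phi> (Suc (Suc (card g)))))"
    by (intro sum.cong refl) (simp add: fib_sum)
  also have "\<dots> = (\<Sum>g\<in>PI j. (if h = 0 then 0 else monom 1 h * (if card g + (h - 1) = j then monom 1 (cost g j) else 0))
     + monom (of_nat (2*h+1)) h * (if card g + h = j then monom 1 (cost g j) else 0)
     + monom (of_nat ((h+1)^2)) h * (if card g + Suc h = j then monom 1 (cost g j) else 0))"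
    unfolding \<phi>_def by (intro sum.cong refl pointwise card_PI_le) simp_all
  also have "\<dots> = ?rhs"
    unfolding Q_alt by (simp add: sum.distrib sum_distrib_left)
  finally show ?thesis .
qed



fun tri :: "nat \<Rightarrow> nat" where
  "tri 0 = 0" | "tri (Suc h) = tri h + Suc h"

lemma PI0: "PI 0 = {{}}" unfolding PI_def by auto

lemma Q0: "Q 0 h = (if h = 0 then 1 else 0)"
proof -
  have "{R \<in> PI 0. card R + h = 0} = (if h = 0 then {{}} else {})" unfolding PI0 by auto
  then show ?thesis unfolding Q_def by (simp add: cost_def)
qed

lemma Q_big: "j < h \<Longrightarrow> Q j h = 0"
  unfolding Q_def by (rule sum.neutral) auto

lemma Q_W: "j \<le> H \<Longrightarrow> Q j h = monom 1 (tri h) * Wb H j h"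
proof (induction j arbitrary: h)
  case 0
  then show ?case by (simp add: Q0)
next
  case (Suc j)
  then have IH: "\<And>h. Q j h = monom 1 (tri h) * Wb H j h" by simp
  show ?case
  proof (cases "H < h")
    case True
    then show ?thesis using Suc by (simp add: Q_big)
  next
    case False
    have e3: "monom (of_nat ((h+1)^2)) h * monom 1 (tri (Suc h)) = monom 1 (tri h) * jlam (Suc h)"
      by (simp add: jlam_def mult_monom mult_2 add_ac)
    have e2: "monom (of_nat (2*h+1)) h * monom 1 (tri h) = monom 1 (tri h) * jb h"
      by (simp add: jb_def mult_monom add.commute)
    have e1: "h \<noteq> 0 \<Longrightarrow> monom 1 h * monom 1 (tri (h - 1)) = (monom 1 (tri h) :: int poly)"
      by (cases h) (simp_all add: mult_monom add.commute)
    have "Q (Suc j) h = (if h = 0 then 0 else monom 1 h * monom 1 (tri (h - 1)) * Wb H j (h - 1))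
      + monom (of_nat (2*h+1)) h * monom 1 (tri h) * Wb H j h
      + monom (of_nat ((h+1)^2)) h * monom 1 (tri (Suc h)) * Wb H j (Suc h)"
      unfolding Q_rec IH by (simp add: mult.assoc)
    also have "\<dots> = monom 1 (tri h) * ((if h = 0 then 0 else Wb H j (h - 1)) + jb h * Wb H j h
       + jlam (Suc h) * Wb H j (Suc h))"
      unfolding e2 e3 using e1 by (simp add: algebra_simps)
    finally show ?thesis using False by simp
  qed
qed

definition gr :: "nat \<Rightarrow> (nat \<Rightarrow> nat) \<Rightarrow> (nat \<times> nat) set" where
  "gr n w = (\<lambda>i. (i, w i)) ` {1..n}"

lemma gr_mem: "(i,v) \<in> gr n w \<longleftrightarrow> i \<in> {1..n} \<and> v = w i"
  unfolding gr_def by auto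

lemma gr_PI: assumes p: "w permutes {1..n}" shows "gr n w \<in> PI n" "card (gr n w) + 0 = n"
proof -
  have im: "i \<in> {1..n} \<Longrightarrow> w i \<in> {1..n}" for i using permutes_in_image[OF p] by simp
  have inj: "inj w" using permutes_inj[OF p] .
  show "gr n w \<in> PI n" unfolding PI_def using im inj by (auto simp: gr_mem inj_eq)
  have "inj_on (\<lambda>i. (i, w i)) {1..n}" by (rule inj_onI) auto
  then show "card (gr n w) + 0 = n" unfolding gr_def by (simp add: card_image)
qed

lemma gr_inj: "inj_on (gr n) {w. w permutes {1..n}}"
proof (rule inj_onI)
  fix w w' assume w: "w \<in> {w. w permutes {1..n}}" and w': "w' \<in> {w. w permutes {1..n}}"
    and e: "gr n w = gr n w'"
  show "w = w'"
  proof
    fix i show "w i = w' i"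
    proof (cases "i \<in> {1..n}")
      case True
      then have "(i, w i) \<in> gr n w" by (simp add: gr_mem)
      then have "(i, w i) \<in> gr n w'" using e by simp
      then show ?thesis by (simp add: gr_mem)
    next
      case False
      then show ?thesis using permutes_not_in w w' by (metis mem_Collect_eq)
    qed
  qed
qed

lemma gr_surj: assumes R: "R \<in> PI n" and c: "card R + 0 = n"
  shows "R \<in> gr n ` {w. w permutes {1..n}}"
proof -
  have Rs: "R \<subseteq> {1..n} \<times> {1..n}" and Rf: "\<And>i v v'. (i,v)\<in>R \<Longrightarrow> (i,v')\<in>R \<Longrightarrow> v = v'"
    and Ri: "\<And>i i' v. (i,v)\<in>R \<Longrightarrow> (i',v)\<in>R \<Longrightarrow> i = i'" using R unfolding PI_def by auto
  have D: "Domain R = {1..n}"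
  proof (rule card_subset_eq)
    show "Domain R \<subseteq> {1..n}" using Rs by auto
    show "card (Domain R) = card {1..n}" using card_Domain[OF R] c by simp
  qed simp
  have Rg: "Range R = {1..n}"
  proof (rule card_subset_eq)
    show "Range R \<subseteq> {1..n}" using Rs by auto
    show "card (Range R) = card {1..n}" using card_Range[OF R] c by simp
  qed simp
  define w where "w i = (if i \<in> {1..n} then (THE v. (i,v) \<in> R) else i)" for i
  have wR: "(i, w i) \<in> R" if "i \<in> {1..n}" for i
  proof -
    have "i \<in> Domain R" using D that by simp
    then obtain v where v: "(i,v) \<in> R" by (rule DomainE)
    have "(THE v'. (i,v') \<in> R) = v"
    proof (rule the_equality)
      show "(i,v) \<in> R" by (rule v)
    next
      fix x assume "(i,x) \<in> R" then show "x = v" using v by (rule Rf)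
    qed
    then show ?thesis using v that unfolding w_def by simp
  qed
  have g: "gr n w = R"
  proof (rule set_eqI, clarify)
    fix i v show "(i,v) \<in> gr n w \<longleftrightarrow> (i,v) \<in> R"
    proof
      assume "(i,v) \<in> gr n w" then show "(i,v) \<in> R" using wR by (auto simp: gr_mem)
    next
      assume a: "(i,v) \<in> R"
      then have i: "i \<in> {1..n}" using Rs by auto
      have "v = w i" by (rule Rf[OF a wR[OF i]])
      then show "(i,v) \<in> gr n w" using i by (simp add: gr_mem)
    qed
  qed
  have "w permutes {1..n}"
  proof (rule bij_imp_permutes)
    show "bij_betw w {1..n} {1..n}" unfolding bij_betw_def
    proof
      show "inj_on w {1..n}"
      proof (rule inj_onI)
        fix i i' assume a: "i \<in> {1..n}" "i' \<in> {1..n}" "w i = w i'"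
        have "(i, w i) \<in> R" using wR[OF a(1)] .
        moreover have "(i', w i) \<in> R" using wR[OF a(2)] a(3) by simp
        ultimately show "i = i'" by (rule Ri)
      qed
      have "w ` {1..n} = Range R"
      proof
        show "w ` {1..n} \<subseteq> Range R" using wR by blast
        show "Range R \<subseteq> w ` {1..n}"
        proof
          fix v assume "v \<in> Range R" then obtain i where a: "(i,v) \<in> R" by auto
          then have i: "i \<in> {1..n}" using Rs by auto
          have "v = w i" by (rule Rf[OF a wR[OF i]])
          then show "v \<in> w ` {1..n}" using i by blast
        qed
      qed
      then show "w ` {1..n} = {1..n}" using Rg by simp
    qed
    show "w x = x" if "x \<notin> {1..n}" for x using that unfolding w_def by (simp only: if_False)
  qed
  then show ?thesis using g by blast
qed

lemma gr_bij: "bij_betw (gr n) {w. w permutes {1..n}} {R\<in>PI n. card R + 0 = n}"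
  unfolding bij_betw_def using gr_inj gr_PI gr_surj by blast

lemma cost_gr: assumes p: "w permutes {1..n}" shows "cost (gr n w) n = dep n w"
proof -
  have im: "i \<in> {1..n} \<Longrightarrow> w i \<in> {1..n}" for i using permutes_in_image[OF p] by simp
  have "hk (gr n w) k = (\<Sum>i=1..n. if i \<le> k \<and> k < w i then 1 else 0)" if k: "k \<in> {1..n}" for k
  proof -
    have "{i\<in>{1..k}. \<forall>v. (i,v)\<in>gr n w \<longrightarrow> k < v} = {i\<in>{1..n}. i \<le> k \<and> k < w i}"
      using k by (auto simp: gr_mem)
    then have "hk (gr n w) k = card {i\<in>{1..n}. i \<le> k \<and> k < w i}" unfolding hk_def by simp
    also have "\<dots> = (\<Sum>i=1..n. if i \<le> k \<and> k < w i then 1 else 0)"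
      using sum.inter_filter[of "{1..n}" "\<lambda>_. (1::nat)" "\<lambda>i. i \<le> k \<and> k < w i"] by simp
    finally show ?thesis .
  qed
  then have "cost (gr n w) n = (\<Sum>k=1..n. \<Sum>i=1..n. if i \<le> k \<and> k < w i then 1 else 0)"
    unfolding cost_def by (intro sum.cong) auto
  also have "\<dots> = (\<Sum>i=1..n. \<Sum>k=1..n. if i \<le> k \<and> k < w i then 1 else 0)"
    by (rule sum.swap)
  also have "\<dots> = (\<Sum>i=1..n. if i < w i then w i - i else 0)"
  proof (rule sum.cong[OF refl])
    fix i assume i: "i \<in> {1..n}"
    have "(\<Sum>k=1..n. if i \<le> k \<and> k < w i then 1 else 0) = (\<Sum>k\<in>{k\<in>{1..n}. i \<le> k \<and> k < w i}. (1::nat))"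
      using sum.inter_filter[of "{1..n}" "\<lambda>_. (1::nat)" "\<lambda>k. i \<le> k \<and> k < w i"] by simp
    also have "{k\<in>{1..n}. i \<le> k \<and> k < w i} = {i..<w i}" using i im[OF i] by auto
    finally show "(\<Sum>k=1..n. if i \<le> k \<and> k < w i then 1 else 0) = (if i < w i then w i - i else 0)"
      by simp
  qed
  finally show ?thesis unfolding dep_def .
qed

theorem mainTheorem4:
  shows "\<forall>n. \<exists>K. \<forall>k\<ge>K. fps_nth (jconv k) n = fps_nth depthGF n"
proof
  fix n
  show "\<exists>K. \<forall>k\<ge>K. fps_nth (jconv k) n = fps_nth depthGF n"
  proof (intro exI allI impI)
    fix k assume k: "n \<le> k"
    have "fps_nth (jconv k) n = Wb k n 0" by (rule jconv_nth)
    also have "\<dots> = Q n 0" using Q_W[OF k, of 0] by simp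
    also have "\<dots> = (\<Sum>R\<in>{R\<in>PI n. card R + 0 = n}. monom 1 (cost R n))" unfolding Q_def ..
    also have "\<dots> = (\<Sum>w\<in>{w. w permutes {1..n}}. monom 1 (cost (gr n w) n))"
      by (rule sum.reindex_bij_betw[OF gr_bij, symmetric])
    also have "\<dots> = (\<Sum>w\<in>{w. w permutes {1..n}}. monom 1 (dep n w))"
      by (intro sum.cong refl) (simp add: cost_gr)
    also have "\<dots> = fps_nth depthGF n" unfolding depthGF_def by simp
    finally show "fps_nth (jconv k) n = fps_nth depthGF n" .
  qed
qed

end
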